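(* Let $S$ be a solid and let $x,y,z\in S$. If $e(x)(y+z)\ne e(x)y+e(x)z$, then $e(x)y=e(x)z$.
   Context: A solid is a set $S$ with two binary operations $+$ and $\cdot$ (written $xy$) and a binary relation $\le$ satisfying the following axioms (all variables range over $S$). (A1) $+$ is associative and commutative. (A2) For each $x$ there is $e$ with $x+e=x$ such that $e+f=e$ for every $f$ with $x+f=x$; this $e$ is unique and is denoted $e(x)$ (the magnitude of $x$). An element $x$ with $x=e(x)$ is called a magnitude. (A3) For each $x$ there is $s$ with $x+s=e(x)$ and $e(s)=e(x)$; it is unique and denoted $-x$; write $x-y$ for $x+(-y)$. (A4) $e(x+y)=e(x)$ or $e(x+y)=e(y)$. (M1) $\cdot$ is associative and commutative. (M2) For each $x\neq e(x)$ there is $u$ with $xu=x$ such that $uv=u$ for every $v$ with $xv=x$; it is unique and denoted $u(x)$. (M3) For each $x\ne e(x)$ there is $d$ with $xd=u(x)$ and $u(d)=u(x)$; it is unique and denoted $x^{-1}$; write $y/x$ for $yx^{-1}$. (M4) If $x\neq e(x)$ and $y\ne e(y)$ then $u(xy)=u(x)$ or $u(xy)=u(y)$. (O1) $\le$ is a total order (reflexive, antisymmetric, transitive, total); $x<y$ means $x\le y$ and $x\ne y$. (O2) $x\le y\Rightarrow x+z\le y+z$. (O3) $y+e(x)=e(x)\Rightarrow (y\le e(x)$ and $-y\le e(x))$. (O4) $(e(x)<x$ and $y\le z)\Rightarrow xy\le xz$. (O5) $e(y)\le y\le z\Rightarrow e(x)y\le e(x)z$. (AM1) For all $x,y$ there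 is $z$ with $e(x)y=e(z)$. (AM2) $e(xy)=e(x)y+e(y)x$. (AM3) If $x\ne e(x)$ then $e(u(x))=e(x)/x$. (AM4) (distributivity axiom) $xy+xz=x(y+z)+e(x)y+e(x)z$. (AM5) $-(xy)=(-x)y$. (E1) There is $m$ with $m+x=x$ for all $x$; it is unique, called zero and denoted $0$. (E2) There is $u$ with $ux=x$ for all $x$; it is unique, called one and denoted $1$. (E3) There is $M$ with $e(x)+M=M$ for all $x$. (E4) There is $x$ with $e(x)\ne 0$ and $e(x)\ne M$. (E5) For every $x$ there is $a$ with $x=a+e(x)$ and $e(a)=0$. (E6) If $x,y$ are magnitudes with $x<y$, there is $z$ with $z\ne e(z)$ and $x<z<y$. Further notation: $S^*=\{x\in S: x\ne e(x)\}$ (zeroless elements). $x$ is positive if $e(x)\le x$ and negative if $x<e(x)$; $|x|=x$ if $x$ is positive and $|x|=-x$ if $x$ is negative. $x$ is precise if $e(x)=0$. The relative uncertainty $R(x)$ is $e(u(x))$ if $x\ne e(x)$, and $M$ (from (E3)) if $x=e(x)$. *)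

theory Defs
  imports Main
begin

definition mag :: "('a \<Rightarrow> 'a \<Rightarrow> 'a) \<Rightarrow> 'a \<Rightarrow> 'a" where
  "mag pl x = (THE e. pl x e = x \<and> (\<forall>f. pl x f = x \<longrightarrow> pl e f = e))"

definition sneg :: "('a \<Rightarrow> 'a \<Rightarrow> 'a) \<Rightarrow> 'a \<Rightarrow> 'a" where
  "sneg pl x = (THE s. pl x s = mag pl x \<and> mag pl s = mag pl x)"

definition sunit :: "('a \<Rightarrow> 'a \<Rightarrow> 'a) \<Rightarrow> 'a \<Rightarrow> 'a" where
  "sunit ml x = (THE u. ml x u = x \<and> (\<forall>v. ml x v = x \<longrightarrow> ml u v = u))"

definition sinv :: "('a \<Rightarrow> 'a \<Rightarrow> 'a) \<Rightarrow> ('a \<Rightarrow> 'a \<Rightarrow> 'a) \<Rightarrow> 'a \<Rightarrow> 'a" where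
  "sinv pl ml x = (THE d. d \<noteq> mag pl d \<and> ml x d = sunit ml x \<and> sunit ml d = sunit ml x)"

definition szero :: "('a \<Rightarrow> 'a \<Rightarrow> 'a) \<Rightarrow> 'a" where
  "szero pl = (THE m. \<forall>x. pl m x = x)"

definition sbig :: "('a \<Rightarrow> 'a \<Rightarrow> 'a) \<Rightarrow> 'a" where
  "sbig pl = (THE M. \<forall>x. pl (mag pl x) M = M)"

definition solid :: "('a \<Rightarrow> 'a \<Rightarrow> 'a) \<Rightarrow> ('a \<Rightarrow> 'a \<Rightarrow> 'a) \<Rightarrow> ('a \<Rightarrow> 'a \<Rightarrow> bool) \<Rightarrow> bool" where
  "solid pl ml le \<longleftrightarrow>
    \<comment> \<open>A1\<close>
    (\<forall>x y z. pl (pl x y) z = pl x (pl y z)) \<and> (\<forall>x y. pl x y = pl y x) \<and>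
    \<comment> \<open>A2\<close>
    (\<forall>x. \<exists>!e. pl x e = x \<and> (\<forall>f. pl x f = x \<longrightarrow> pl e f = e)) \<and>
    \<comment> \<open>A3\<close>
    (\<forall>x. \<exists>!s. pl x s = mag pl x \<and> mag pl s = mag pl x) \<and>
    \<comment> \<open>A4\<close>
    (\<forall>x y. mag pl (pl x y) = mag pl x \<or> mag pl (pl x y) = mag pl y) \<and>
    \<comment> \<open>M1\<close>
    (\<forall>x y z. ml (ml x y) z = ml x (ml y z)) \<and> (\<forall>x y. ml x y = ml y x) \<and>
    \<comment> \<open>M2\<close>
    (\<forall>x. x \<noteq> mag pl x \<longrightarrow> (\<exists>!u. ml x u = x \<and> (\<forall>v. ml x v = x \<longrightarrow> ml u v = u))) \<and>
    \<comment> \<open>M3\<close>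
    (\<forall>x. x \<noteq> mag pl x \<longrightarrow>
       (\<exists>!d. d \<noteq> mag pl d \<and> ml x d = sunit ml x \<and> sunit ml d = sunit ml x)) \<and>
    \<comment> \<open>M4\<close>
    (\<forall>x y. x \<noteq> mag pl x \<longrightarrow> y \<noteq> mag pl y \<longrightarrow>
       sunit ml (ml x y) = sunit ml x \<or> sunit ml (ml x y) = sunit ml y) \<and>
    \<comment> \<open>O1\<close>
    (\<forall>x. le x x) \<and> (\<forall>x y. le x y \<longrightarrow> le y x \<longrightarrow> x = y) \<and>
    (\<forall>x y z. le x y \<longrightarrow> le y z \<longrightarrow> le x z) \<and> (\<forall>x y. le x y \<or> le y x) \<and>
    \<comment> \<open>O2\<close>
    (\<forall>x y z. le x y \<longrightarrow> le (pl x z) (pl y z)) \<and>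
    \<comment> \<open>O3\<close>
    (\<forall>x y. pl y (mag pl x) = mag pl x \<longrightarrow> le y (mag pl x) \<and> le (sneg pl y) (mag pl x)) \<and>
    \<comment> \<open>O4\<close>
    (\<forall>x y z. (le (mag pl x) x \<and> mag pl x \<noteq> x) \<and> le y z \<longrightarrow> le (ml x y) (ml x z)) \<and>
    \<comment> \<open>O5\<close>
    (\<forall>x y z. le (mag pl y) y \<and> le y z \<longrightarrow> le (ml (mag pl x) y) (ml (mag pl x) z)) \<and>
    \<comment> \<open>AM1\<close>
    (\<forall>x y. \<exists>z. ml (mag pl x) y = mag pl z) \<and>
    \<comment> \<open>AM2\<close>
    (\<forall>x y. mag pl (ml x y) = pl (ml (mag pl x) y) (ml (mag pl y) x)) \<and>
    \<comment> \<open>AM3\<close>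
    (\<forall>x. x \<noteq> mag pl x \<longrightarrow> mag pl (sunit ml x) = ml (mag pl x) (sinv pl ml x)) \<and>
    \<comment> \<open>AM4\<close>
    (\<forall>x y z. pl (ml x y) (ml x z) =
       pl (pl (ml x (pl y z)) (ml (mag pl x) y)) (ml (mag pl x) z)) \<and>
    \<comment> \<open>AM5\<close>
    (\<forall>x y. sneg pl (ml x y) = ml (sneg pl x) y) \<and>
    \<comment> \<open>E1\<close>
    (\<exists>!m. \<forall>x. pl m x = x) \<and>
    \<comment> \<open>E2\<close>
    (\<exists>!u. \<forall>x. ml u x = x) \<and>
    \<comment> \<open>E3\<close>
    (\<exists>M. \<forall>x. pl (mag pl x) M = M) \<and>
    \<comment> \<open>E4\<close>
    (\<exists>x. mag pl x \<noteq> szero pl \<and> mag pl x \<noteq> sbig pl) \<and>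
    \<comment> \<open>E5\<close>
    (\<forall>x. \<exists>a. x = pl a (mag pl x) \<and> mag pl a = szero pl) \<and>
    \<comment> \<open>E6\<close>
    (\<forall>x y. x = mag pl x \<longrightarrow> y = mag pl y \<longrightarrow> le x y \<longrightarrow> x \<noteq> y \<longrightarrow>
       (\<exists>z. z \<noteq> mag pl z \<and> le x z \<and> x \<noteq> z \<and> le z y \<and> z \<noteq> y))"

end

theory Submission
  imports Defs
begin

context
  fixes pl ml :: "'a \<Rightarrow> 'a \<Rightarrow> 'a" and le :: "'a \<Rightarrow> 'a \<Rightarrow> bool"
  assumes S: "solid pl ml le"
begin

lemmas axs = S[unfolded solid_def]

lemma assoc: "pl (pl x y) z = pl x (pl y z)" using axs[THEN conjunct1] by blast
lemma comm: "pl x y = pl y x" using axs[THEN conjunct2, THEN conjunct1] by blast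
lemma A2: "\<exists>!e. pl x e = x \<and> (\<forall>f. pl x f = x \<longrightarrow> pl e f = e)" using axs[THEN conjunct2, THEN conjunct2, THEN conjunct1] by blast
lemma A3: "\<exists>!s. pl x s = mag pl x \<and> mag pl s = mag pl x" using axs[THEN conjunct2, THEN conjunct2, THEN conjunct2, THEN conjunct1] by blast
lemma A4: "mag pl (pl x y) = mag pl x \<or> mag pl (pl x y) = mag pl y" using axs[THEN conjunct2, THEN conjunct2, THEN conjunct2, THEN conjunct2, THEN conjunct1] by blast
lemma mcomm: "ml x y = ml y x" using axs[THEN conjunct2, THEN conjunct2, THEN conjunct2, THEN conjunct2, THEN conjunct2, THEN conjunct2, THEN conjunct1] by blast
lemma refl: "le x x" using axs[THEN conjunct2, THEN conjunct2, THEN conjunct2, THEN conjunct2, THEN conjunct2, THEN conjunct2, THEN conjunct2, THEN conjunct2, THEN conjunct2, THEN conjunct2, THEN conjunct1] by blast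
lemma antisym: "le x y \<Longrightarrow> le y x \<Longrightarrow> x = y" using axs[THEN conjunct2, THEN conjunct2, THEN conjunct2, THEN conjunct2, THEN conjunct2, THEN conjunct2, THEN conjunct2, THEN conjunct2, THEN conjunct2, THEN conjunct2, THEN conjunct2, THEN conjunct1] by blast
lemma trans: "le x y \<Longrightarrow> le y z \<Longrightarrow> le x z" using axs[THEN conjunct2, THEN conjunct2, THEN conjunct2, THEN conjunct2, THEN conjunct2, THEN conjunct2, THEN conjunct2, THEN conjunct2, THEN conjunct2, THEN conjunct2, THEN conjunct2, THEN conjunct2, THEN conjunct1] by blast
lemma total: "le x y \<or> le y x" using axs[THEN conjunct2, THEN conjunct2, THEN conjunct2, THEN conjunct2, THEN conjunct2, THEN conjunct2, THEN conjunct2, THEN conjunct2, THEN conjunct2, THEN conjunct2, THEN conjunct2, THEN conjunct2, THEN conjunct2, THEN conjunct1] by blast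
lemma O2: "le x y \<Longrightarrow> le (pl x z) (pl y z)" using axs[THEN conjunct2, THEN conjunct2, THEN conjunct2, THEN conjunct2, THEN conjunct2, THEN conjunct2, THEN conjunct2, THEN conjunct2, THEN conjunct2, THEN conjunct2, THEN conjunct2, THEN conjunct2, THEN conjunct2, THEN conjunct2, THEN conjunct1] by blast
lemma O3: "pl y (mag pl x) = mag pl x \<Longrightarrow> le y (mag pl x)" using axs[THEN conjunct2, THEN conjunct2, THEN conjunct2, THEN conjunct2, THEN conjunct2, THEN conjunct2, THEN conjunct2, THEN conjunct2, THEN conjunct2, THEN conjunct2, THEN conjunct2, THEN conjunct2, THEN conjunct2, THEN conjunct2, THEN conjunct2, THEN conjunct1] by blast
lemma O5: "le (mag pl y) y \<Longrightarrow> le y z \<Longrightarrow> le (ml (mag pl x) y) (ml (mag pl x) z)"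
  using axs[THEN conjunct2, THEN conjunct2, THEN conjunct2, THEN conjunct2, THEN conjunct2, THEN conjunct2, THEN conjunct2, THEN conjunct2, THEN conjunct2, THEN conjunct2, THEN conjunct2, THEN conjunct2, THEN conjunct2, THEN conjunct2, THEN conjunct2, THEN conjunct2, THEN conjunct2, THEN conjunct1] by blast
lemma AM1: "\<exists>z. ml (mag pl x) y = mag pl z" using axs[THEN conjunct2, THEN conjunct2, THEN conjunct2, THEN conjunct2, THEN conjunct2, THEN conjunct2, THEN conjunct2, THEN conjunct2, THEN conjunct2, THEN conjunct2, THEN conjunct2, THEN conjunct2, THEN conjunct2, THEN conjunct2, THEN conjunct2, THEN conjunct2, THEN conjunct2, THEN conjunct2, THEN conjunct1] by blast
lemma AM2: "mag pl (ml x y) = pl (ml (mag pl x) y) (ml (mag pl y) x)" using axs[THEN conjunct2, THEN conjunct2, THEN conjunct2, THEN conjunct2, THEN conjunct2, THEN conjunct2, THEN conjunct2, THEN conjunct2, THEN conjunct2, THEN conjunct2, THEN conjunct2, THEN conjunct2, THEN conjunct2, THEN conjunct2, THEN conjunct2, THEN conjunct2, THEN conjunct2, THEN conjunct2, THEN conjunct2, THEN conjunct1] by blast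
lemma AM4: "pl (ml x y) (ml x z) = pl (pl (ml x (pl y z)) (ml (mag pl x) y)) (ml (mag pl x) z)"
  using axs[THEN conjunct2, THEN conjunct2, THEN conjunct2, THEN conjunct2, THEN conjunct2, THEN conjunct2, THEN conjunct2, THEN conjunct2, THEN conjunct2, THEN conjunct2, THEN conjunct2, THEN conjunct2, THEN conjunct2, THEN conjunct2, THEN conjunct2, THEN conjunct2, THEN conjunct2, THEN conjunct2, THEN conjunct2, THEN conjunct2, THEN conjunct2, THEN conjunct1] by blast
lemma AM5: "sneg pl (ml x y) = ml (sneg pl x) y" using axs[THEN conjunct2, THEN conjunct2, THEN conjunct2, THEN conjunct2, THEN conjunct2, THEN conjunct2, THEN conjunct2, THEN conjunct2, THEN conjunct2, THEN conjunct2, THEN conjunct2, THEN conjunct2, THEN conjunct2, THEN conjunct2, THEN conjunct2, THEN conjunct2, THEN conjunct2, THEN conjunct2, THEN conjunct2, THEN conjunct2, THEN conjunct2, THEN conjunct2, THEN conjunct1] by blast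
lemma E1: "\<exists>!m. \<forall>x. pl m x = x" using axs[THEN conjunct2, THEN conjunct2, THEN conjunct2, THEN conjunct2, THEN conjunct2, THEN conjunct2, THEN conjunct2, THEN conjunct2, THEN conjunct2, THEN conjunct2, THEN conjunct2, THEN conjunct2, THEN conjunct2, THEN conjunct2, THEN conjunct2, THEN conjunct2, THEN conjunct2, THEN conjunct2, THEN conjunct2, THEN conjunct2, THEN conjunct2, THEN conjunct2, THEN conjunct2, THEN conjunct1] by blast

lemma mag_prop: "pl x (mag pl x) = x \<and> (\<forall>f. pl x f = x \<longrightarrow> pl (mag pl x) f = mag pl x)"
  unfolding mag_def by (rule theI'[OF A2])
lemma mag_eqI: "pl x e = x \<Longrightarrow> (\<forall>f. pl x f = x \<longrightarrow> pl e f = e) \<Longrightarrow> mag pl x = e"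
  unfolding mag_def by (rule the1_equality[OF A2]) auto
lemma mag_mag: "mag pl (mag pl x) = mag pl x"
  by (rule mag_eqI) (use mag_prop in auto)
lemma mag_idem: "pl (mag pl x) (mag pl x) = mag pl x"
  using mag_prop by blast
lemma sneg_prop: "pl x (sneg pl x) = mag pl x \<and> mag pl (sneg pl x) = mag pl x"
  unfolding sneg_def by (rule theI'[OF A3])
lemma sneg_eqI: "pl x s = mag pl x \<Longrightarrow> mag pl s = mag pl x \<Longrightarrow> sneg pl x = s"
  unfolding sneg_def by (rule the1_equality[OF A3]) auto
lemma sneg_mag: "sneg pl (mag pl x) = mag pl x"
  by (rule sneg_eqI) (simp_all add: mag_mag mag_idem)

lemma mag_add: "mag pl (pl u v) = pl (mag pl u) (mag pl v)"
proof -
  have h1: "pl (mag pl (pl u v)) (mag pl u) = mag pl (pl u v)"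
    using mag_prop[of "pl u v"] mag_prop[of u] by (metis assoc comm)
  have h2: "pl (mag pl (pl u v)) (mag pl v) = mag pl (pl u v)"
    using mag_prop[of "pl u v"] mag_prop[of v] by (metis assoc)
  from A4[of u v] show ?thesis
  proof
    assume "mag pl (pl u v) = mag pl u" with h2 show ?thesis by simp
  next
    assume "mag pl (pl u v) = mag pl v" with h1 show ?thesis by (simp add: comm)
  qed
qed

lemma sneg_add: "sneg pl (pl u v) = pl (sneg pl u) (sneg pl v)"
proof (rule sneg_eqI)
  have "pl (pl u v) (pl (sneg pl u) (sneg pl v)) = pl (pl u (sneg pl u)) (pl v (sneg pl v))"
    by (metis assoc comm)
  then show "pl (pl u v) (pl (sneg pl u) (sneg pl v)) = mag pl (pl u v)"
    using sneg_prop mag_add by simp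
  show "mag pl (pl (sneg pl u) (sneg pl v)) = mag pl (pl u v)"
    using sneg_prop mag_add by simp
qed

lemma zero: "pl (szero pl) x = x"
proof -
  have "\<forall>x. pl (szero pl) x = x" unfolding szero_def by (rule theI'[OF E1])
  then show ?thesis by blast
qed

lemma zero_r: "pl x (szero pl) = x" by (metis zero comm)
lemma lcomm: "pl x (pl y z) = pl y (pl x z)" by (metis assoc comm)

lemma zero_le_mag: "le (szero pl) (mag pl x)"
  by (rule O3) (simp add: zero)

lemma mags: "mag pl (ml (mag pl x) y) = ml (mag pl x) y"
  using AM1[of x y] mag_mag by metis

lemma ml_sneg: "ml (mag pl x) (sneg pl w) = ml (mag pl x) w"
proof -
  have "ml (mag pl x) (sneg pl w) = sneg pl (ml w (mag pl x))" by (simp add: AM5 mcomm)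
  also have "\<dots> = sneg pl (ml (mag pl x) w)" by (simp add: mcomm)
  also have "\<dots> = ml (mag pl x) w" by (metis mags sneg_mag)
  finally show ?thesis .
qed

lemma le_imp_add: "m = mag pl m \<Longrightarrow> n = mag pl n \<Longrightarrow> le m n \<Longrightarrow> pl m n = n"
proof -
  assume m: "m = mag pl m" and n: "n = mag pl n" and mn: "le m n"
  have "le (pl m n) (pl n n)" by (rule O2[OF mn])
  then have 1: "le (pl m n) n" using n mag_idem by metis
  have "le (pl (szero pl) n) (pl m n)" using O2[OF zero_le_mag[of m]] m by simp
  then have 2: "le n (pl m n)" by (simp add: zero)
  from 1 2 show ?thesis by (rule antisym)
qed

lemma add_imp_le: "n = mag pl n \<Longrightarrow> pl m n = n \<Longrightarrow> le m n"
proof -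
  assume n: "n = mag pl n" and e: "pl m n = n"
  have "le (pl (szero pl) m) (pl n m)" using O2[OF zero_le_mag[of n]] n by simp
  then show ?thesis using e by (simp add: zero zero_r comm)
qed

lemma neg_pos: "\<not> le (mag pl y) y \<Longrightarrow> le (mag pl (sneg pl y)) (sneg pl y)"
proof -
  assume "\<not> le (mag pl y) y"
  then have "le y (mag pl y)" using total by blast
  then have "le (pl y (sneg pl y)) (pl (mag pl y) (sneg pl y))" by (rule O2)
  moreover have "pl (mag pl y) (sneg pl y) = sneg pl y"
    using mag_prop[of "sneg pl y"] sneg_prop[of y] by (simp add: comm)
  ultimately show ?thesis using sneg_prop[of y] by simp
qed

lemma L: "le (ml (mag pl x) w) (ml (mag pl x) (pl w (mag pl z)))"
proof (cases "le (mag pl w) w")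
  case True
  have "le (pl (szero pl) w) (pl (mag pl z) w)" by (rule O2[OF zero_le_mag])
  then have "le w (pl w (mag pl z))" by (simp add: zero zero_r comm)
  then show ?thesis using O5 True by blast
next
  case False
  note p = neg_pos[OF False]
  have "le (pl (szero pl) (sneg pl w)) (pl (mag pl z) (sneg pl w))" by (rule O2[OF zero_le_mag])
  then have "le (sneg pl w) (pl (sneg pl w) (mag pl z))" by (simp add: zero zero_r comm)
  then have "le (ml (mag pl x) (sneg pl w)) (ml (mag pl x) (pl (sneg pl w) (mag pl z)))"
    using O5 p by blast
  moreover have "pl (sneg pl w) (mag pl z) = sneg pl (pl w (mag pl z))"
    by (simp add: sneg_add sneg_mag)
  ultimately show ?thesis by (simp add: ml_sneg)
qed

lemma D: "pl (ml (mag pl x) (pl y z)) (ml (mag pl x) z) =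
  pl (ml (mag pl x) (pl y (mag pl z))) (pl (ml (mag pl x) (pl y z)) (ml (mag pl x) z))"
proof -
  have "pl (ml (mag pl x) (pl y z)) (ml (mag pl x) (sneg pl z)) =
    pl (pl (ml (mag pl x) (pl (pl y z) (sneg pl z))) (ml (mag pl x) (pl y z))) (ml (mag pl x) (sneg pl z))"
    using AM4[of "mag pl x" "pl y z" "sneg pl z"] by (simp add: mag_mag)
  moreover have "pl (pl y z) (sneg pl z) = pl y (mag pl z)" using sneg_prop assoc by metis
  ultimately show ?thesis by (simp add: ml_sneg assoc)
qed

lemma sum_mags: "m = mag pl m \<Longrightarrow> n = mag pl n \<Longrightarrow> pl m n = m \<or> pl m n = n"
  by (metis total le_imp_add comm)

lemma key:
  assumes ab: "le (ml (mag pl x) y) (ml (mag pl x) z)" and ne: "ml (mag pl x) y \<noteq> ml (mag pl x) z"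
  shows "ml (mag pl x) (pl y z) = pl (ml (mag pl x) y) (ml (mag pl x) z)"
proof -
  define a where "a = ml (mag pl x) y"
  define b where "b = ml (mag pl x) z"
  define c where "c = ml (mag pl x) (pl y z)"
  define d' where "d' = ml (mag pl x) (pl z (mag pl y))"
  have ma: "a = mag pl a" and mb: "b = mag pl b" and mc: "c = mag pl c" and md: "d' = mag pl d'"
    unfolding a_def b_def c_def d'_def by (simp_all add: mags)
  have ab': "pl a b = b" using le_imp_add[OF ma mb] ab a_def b_def by simp
  have "pl a b = pl (pl c a) b" using AM4[of "mag pl x" y z] unfolding a_def b_def c_def
    by (simp add: mag_mag)
  then have "pl a b = pl c (pl a b)" by (simp add: assoc)
  then have cb: "pl c b = b" using ab' by simp
  have "le b d'" using L[of x z y] unfolding b_def d'_def .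
  have Dc: "pl c a = pl d' (pl c a)" using D[of x z y] unfolding a_def c_def d'_def by (simp add: comm)
  have mca: "pl c a = mag pl (pl c a)" using mc ma mag_add by simp
  show ?thesis
  proof (cases "pl c a = a")
    case True
    then have "le d' a" using add_imp_le[OF ma] Dc by simp
    with \<open>le b d'\<close> have "le b a" by (rule trans)
    with ab ne show ?thesis unfolding a_def b_def using antisym by blast
  next
    case False
    then have ca: "pl c a = c" using sum_mags[OF mc ma] by blast
    then have "le d' c" using add_imp_le[OF mc] Dc by simp
    with \<open>le b d'\<close> have "le b c" by (rule trans)
    moreover have "le c b" using add_imp_le[OF mb cb] .
    ultimately have "c = b" by (rule antisym[rotated])
    then show ?thesis using ab' unfolding a_def b_def c_def by simp
  qed
qed

end

theorem mainTheorem5: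
  fixes pl ml :: "'a \<Rightarrow> 'a \<Rightarrow> 'a" and le :: "'a \<Rightarrow> 'a \<Rightarrow> bool" and x y z :: 'a
  assumes "solid pl ml le"
    and "ml (mag pl x) (pl y z) \<noteq> pl (ml (mag pl x) y) (ml (mag pl x) z)"
  shows "ml (mag pl x) y = ml (mag pl x) z"
proof (rule ccontr)
  assume ne: "ml (mag pl x) y \<noteq> ml (mag pl x) z"
  show False
  proof (cases "le (ml (mag pl x) y) (ml (mag pl x) z)")
    case True
    then show False using key[OF assms(1) True ne] assms(2) by simp
  next
    case False
    then have "le (ml (mag pl x) z) (ml (mag pl x) y)" using total[OF assms(1)] by blast
    then have "ml (mag pl x) (pl z y) = pl (ml (mag pl x) z) (ml (mag pl x) y)"
      using key[OF assms(1)] ne by metis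
    then show False using assms(2) comm[OF assms(1)] by metis
  qed
qed

end
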